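(* Let $B$ be a finite supersoluble brace, and let $p$ be the smallest prime dividing $|B|$. If $C$ is a subbrace of $B$ with $|B:C|=p$, then $C$ is an ideal of $B$.
   Context: A brace (skew left brace) is a set $B$ with two binary operations $+$ and $\cdot$ such that $(B,+)$ and $(B,\cdot)$ are groups and $a(b+c)=ab-a+ac$ for all $a,b,c\in B$. A subbrace is a subset that is a subgroup of both groups. $\lambda_a(b)=-a+ab$ defines a homomorphism $\lambda\colon(B,\cdot)\to\operatorname{Aut}(B,+)$. An ideal is a subbrace normal in both groups and invariant under all $\lambda_b$; quotients by ideals are braces. $\operatorname{Soc}(B)=\operatorname{Ker}\lambda\cap Z(B,+)$. $B$ is supersoluble if there is a finite chain of ideals $\{0\}=I_0\le\dots\le I_n=B$ such that for each $i$, either $(I_{i+1}/I_i,+)$ is infinite cyclic and $I_{i+1}/I_i\le\operatorname{Soc}(B/I_i)$, or $I_{i+1}/I_i$ has prime order. For a subbrace $C$ of a finite brace, $|B:C|=|B|/|C|$. (The paper phrases $p$ as the smallest prime in $\pi(B,+)$, the set of primes that are orders of elements of $(B,+)$.) *)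

theory Defs
  imports "HOL-Algebra.Algebra"
begin

text \<open>A (skew left) brace is given by two group structures A (the additive group (B,+))
 and M (the multiplicative group (B,.)) on the same carrier B, with
 a(b+c) = ab - a + ac.\<close>

definition brace :: "'a monoid \<Rightarrow> 'a monoid \<Rightarrow> bool" where
  "brace A M \<longleftrightarrow> group A \<and> group M \<and> carrier A = carrier M \<and>
     (\<forall>a\<in>carrier A. \<forall>b\<in>carrier A. \<forall>c\<in>carrier A.
        a \<otimes>\<^bsub>M\<^esub> (b \<otimes>\<^bsub>A\<^esub> c) =
          ((a \<otimes>\<^bsub>M\<^esub> b) \<otimes>\<^bsub>A\<^esub> inv\<^bsub>A\<^esub> a) \<otimes>\<^bsub>A\<^esub> (a \<otimes>\<^bsub>M\<^esub> c))"

definition brace_lambda :: "'a monoid \<Rightarrow> 'a monoid \<Rightarrow> 'a \<Rightarrow> 'a \<Rightarrow> 'a" where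
  "brace_lambda A M a b = inv\<^bsub>A\<^esub> a \<otimes>\<^bsub>A\<^esub> (a \<otimes>\<^bsub>M\<^esub> b)"

definition subbrace :: "'a monoid \<Rightarrow> 'a monoid \<Rightarrow> 'a set \<Rightarrow> bool" where
  "subbrace A M C \<longleftrightarrow> subgroup C A \<and> subgroup C M"

definition brace_ideal :: "'a monoid \<Rightarrow> 'a monoid \<Rightarrow> 'a set \<Rightarrow> bool" where
  "brace_ideal A M I \<longleftrightarrow> subbrace A M I \<and> normal I A \<and> normal I M \<and>
     (\<forall>b\<in>carrier M. \<forall>x\<in>I. brace_lambda A M b x \<in> I)"

definition brace_socle :: "'a monoid \<Rightarrow> 'a monoid \<Rightarrow> 'a set" where
  "brace_socle A M = {a \<in> carrier A.
      (\<forall>b\<in>carrier A. brace_lambda A M a b = b) \<and>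
      (\<forall>b\<in>carrier A. a \<otimes>\<^bsub>A\<^esub> b = b \<otimes>\<^bsub>A\<^esub> a)}"

text \<open>The quotient brace B/I is (A Mod I, M Mod I) (for an ideal I the additive
 and multiplicative cosets coincide). The factor I_{i+1}/I_i as a subset of B/I_i:\<close>
definition brace_factor :: "'a monoid \<Rightarrow> 'a set \<Rightarrow> 'a set \<Rightarrow> 'a set set" where
  "brace_factor A J I = (\<lambda>x. I #>\<^bsub>A\<^esub> x) ` J"

definition infinite_cyclic_in :: "('b, 'c) monoid_scheme \<Rightarrow> 'b set \<Rightarrow> bool" where
  "infinite_cyclic_in G H \<longleftrightarrow> infinite H \<and> (\<exists>g\<in>H. H = generate G {g})"

definition supersoluble_brace :: "'a monoid \<Rightarrow> 'a monoid \<Rightarrow> bool" where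
  "supersoluble_brace A M \<longleftrightarrow> brace A M \<and>
     (\<exists>(I :: nat \<Rightarrow> 'a set) n.
        I 0 = {\<one>\<^bsub>A\<^esub>} \<and> I n = carrier A \<and>
        (\<forall>i\<le>n. brace_ideal A M (I i)) \<and>
        (\<forall>i<n. I i \<subseteq> I (Suc i) \<and>
           ((infinite_cyclic_in (A Mod (I i)) (brace_factor A (I (Suc i)) (I i)) \<and>
             brace_factor A (I (Suc i)) (I i) \<subseteq> brace_socle (A Mod (I i)) (M Mod (I i)))
            \<or> Factorial_Ring.prime (card (brace_factor A (I (Suc i)) (I i))))))"

end

theory Submission
  imports Defs
begin

lemma funpow_mult_fix:
  assumes "(f ^^ d) y = y" shows "(f ^^ (d * t)) y = y"
proof (induction t)
  case 0 then show ?case by simp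
next
  case (Suc t)
  have "d * Suc t = d + d * t" by simp
  then have "(f ^^ (d * Suc t)) y = (f ^^ d) ((f ^^ (d * t)) y)" by (simp add: funpow_add)
  then show ?case using Suc assms by simp
qed

lemma orbit_fix:
  fixes f :: "'b \<Rightarrow> 'b" and p m :: nat
  assumes finY: "finite Y" and cY: "card Y < p" and fY: "\<And>z. z \<in> Y \<Longrightarrow> f z \<in> Y"
    and y: "y \<in> Y" and per: "(f ^^ m) y = y" and m: "0 < m"
    and pr: "\<And>q. Factorial_Ring.prime q \<Longrightarrow> q dvd m \<Longrightarrow> p \<le> q"
  shows "f y = y"
proof -
  define d where "d = (LEAST d. 0 < d \<and> (f ^^ d) y = y)"
  have ex: "0 < m \<and> (f^^m) y = y" using m per by auto
  have d: "0 < d \<and> (f ^^ d) y = y" unfolding d_def by (rule LeastI, rule ex)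
  have dmin: "\<And>e. 0 < e \<Longrightarrow> (f ^^ e) y = y \<Longrightarrow> d \<le> e" unfolding d_def by (rule Least_le) simp
  have iterY: "\<And>i. (f ^^ i) y \<in> Y"
  proof -
    fix i show "(f ^^ i) y \<in> Y" by (induct i) (auto simp: y fY)
  qed
  have "(f ^^ (m mod d)) y = y"
  proof -
    have eqm: "m mod d + d * (m div d) = m" by simp
    have "(f^^m) y = (f ^^ (m mod d + d * (m div d))) y" by (simp only: eqm)
    also have "\<dots> = (f ^^ (m mod d)) ((f ^^ (d * (m div d))) y)" by (simp only: funpow_add comp_apply)
    finally have "(f^^m) y = (f ^^ (m mod d)) ((f ^^ (d * (m div d))) y)" .
    also have "(f ^^ (d * (m div d))) y = y" using funpow_mult_fix[where f=f and d=d and y=y, OF conjunct2[OF d]] by simp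
    finally show ?thesis using per by simp
  qed
  then have "m mod d = 0"
  proof (rule contrapos_pp)
    assume "m mod d \<noteq> 0"
    then have "d \<le> m mod d" using dmin \<open>(f ^^ (m mod d)) y = y\<close> by simp
    moreover have "m mod d < d" using d by simp
    ultimately show "(f ^^ (m mod d)) y \<noteq> y" by simp
  qed
  then have dvd: "d dvd m" by auto
  have key: "\<And>i j. i < j \<Longrightarrow> j < d \<Longrightarrow> (f^^i) y \<noteq> (f^^j) y"
  proof
    fix i j assume ij: "i < j" "j < d" and eq: "(f^^i) y = (f^^j) y"
    have "(f^^(d - j + i)) y = (f^^(d-j)) ((f^^i) y)" by (simp add: funpow_add)
    also have "\<dots> = (f^^(d-j)) ((f^^j) y)" using eq by simp
    also have "\<dots> = (f^^(d - j + j)) y" by (simp add: funpow_add)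
    also have "\<dots> = y" using ij d by simp
    finally have "d \<le> d - j + i" using dmin ij by simp
    then show False using ij by simp
  qed
  have inj: "inj_on (\<lambda>i. (f ^^ i) y) {..<d}"
  proof (rule inj_onI, rule ccontr)
    fix i j assume ij: "i \<in> {..<d}" "j \<in> {..<d}" "(f ^^ i) y = (f ^^ j) y" "i \<noteq> j"
    show False
    proof (cases "i < j")
      case True then show False using key[of i j] ij by simp
    next
      case False then have "j < i" using ij by simp
      then show False using key[of j i] ij by simp
    qed
  qed
  have "card {..<d} \<le> card Y"
    by (rule card_inj_on_le[OF inj _ finY]) (auto simp: iterY)
  then have dp: "d < p" using cY by simp
  show ?thesis
  proof (cases "d = 1")
    case True then show ?thesis using d by simp
  next
    case False
    then obtain q where q: "Factorial_Ring.prime q" "q dvd d" using prime_factor_nat by blast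
    then have "q \<le> d" using d dvd_imp_le by blast
    moreover have "p \<le> q" using pr q dvd dvd_trans by blast
    ultimately show ?thesis using dp by simp
  qed
qed

lemma (in group) r_coset_img: "K #> x = (\<lambda>k. k \<otimes> x) ` K"
  unfolding r_coset_def by auto

lemma funpow_pos: "0 < m \<Longrightarrow> (f ^^ m) z = (f ^^ (m - 1)) (f z)"
  by (cases m) (simp_all add: funpow_Suc_right del: funpow.simps)

lemma (in group) triv_mod:
  fixes \<sigma> :: "'a \<Rightarrow> 'a" and m p :: nat
  assumes fin: "finite (carrier G)"
    and J: "subgroup J G" and K: "subgroup K G" and KJ: "K \<subseteq> J"
    and sJ: "\<And>x. x \<in> J \<Longrightarrow> \<sigma> x \<in> J" and sK: "\<And>x. x \<in> K \<Longrightarrow> \<sigma> x \<in> K"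
    and hom: "\<And>x y. x \<in> J \<Longrightarrow> y \<in> J \<Longrightarrow> \<sigma> (x \<otimes> y) = \<sigma> x \<otimes> \<sigma> y"
    and per: "\<And>x. x \<in> J \<Longrightarrow> (\<sigma> ^^ m) x = x" and m: "0 < m"
    and pr: "\<And>q. Factorial_Ring.prime q \<Longrightarrow> q dvd m \<Longrightarrow> p \<le> q"
    and cardX: "card ((\<lambda>x. K #> x) ` J) \<le> p"
    and x: "x \<in> J"
  shows "\<sigma> x \<in> K #> x"
proof -
  have Jc: "J \<subseteq> carrier G" using J subgroup.subset by blast
  have Kc: "K \<subseteq> carrier G" using K subgroup.subset by blast
  have finJ: "finite J" using fin Jc finite_subset by blast
  have finK: "finite K" using fin Kc finite_subset by blast
  have msuc: "m = Suc (m - 1)" using m by simp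
  have iterK: "\<And>n z. z \<in> K \<Longrightarrow> (\<sigma> ^^ n) z \<in> K"
  proof -
    fix n z assume "z \<in> K" then show "(\<sigma> ^^ n) z \<in> K" by (induct n) (auto simp: sK)
  qed
  have bK: "\<And>z. z \<in> J \<Longrightarrow> \<sigma> z \<in> K \<Longrightarrow> z \<in> K"
  proof -
    fix z assume z: "z \<in> J" "\<sigma> z \<in> K"
    have "z = (\<sigma> ^^ m) z" using per z by simp
    also have "\<dots> = (\<sigma> ^^ (m - 1)) (\<sigma> z)" using funpow_pos[OF m] by simp
    finally have "z = (\<sigma> ^^ (m - 1)) (\<sigma> z)" .
    then show "z \<in> K" using iterK[OF z(2), of "m - 1"] by simp
  qed
  have injJ: "inj_on \<sigma> J"
  proof (rule inj_onI)
    fix a b assume ab: "a \<in> J" "b \<in> J" "\<sigma> a = \<sigma> b"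
    have "a = (\<sigma> ^^ m) a" using per[OF ab(1)] by simp
    also have "\<dots> = (\<sigma> ^^ (m - 1)) (\<sigma> a)" by (rule funpow_pos[OF m])
    also have "\<dots> = (\<sigma> ^^ (m - 1)) (\<sigma> b)" using ab by simp
    also have "\<dots> = (\<sigma> ^^ m) b" by (rule funpow_pos[OF m, symmetric])
    also have "\<dots> = b" using per[OF ab(2)] by simp
    finally show "a = b" .
  qed
  have sKK: "\<sigma> ` K = K"
    by (rule endo_inj_surj[OF finK]) (use sK injJ KJ inj_on_subset in auto)
  have img: "\<And>y. y \<in> J \<Longrightarrow> \<sigma> ` (K #> y) = K #> \<sigma> y"
  proof -
    fix y assume y: "y \<in> J"
    have "\<sigma> ` (K #> y) = (\<lambda>k. \<sigma> (k \<otimes> y)) ` K" by (simp add: r_coset_img image_image)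
    also have "\<dots> = (\<lambda>k. \<sigma> k \<otimes> \<sigma> y) ` K" using hom KJ y by (intro image_cong) auto
    also have "\<dots> = (\<lambda>k. k \<otimes> \<sigma> y) ` (\<sigma> ` K)" by (simp add: image_image)
    also have "\<dots> = K #> \<sigma> y" using sKK by (simp add: r_coset_img)
    finally show "\<sigma> ` (K #> y) = K #> \<sigma> y" .
  qed
  have cosJ: "\<And>y. y \<in> J \<Longrightarrow> K #> y \<subseteq> J"
    using KJ J by (auto simp: r_coset_def subgroup.m_closed)
  define Xs where "Xs = (\<lambda>x. K #> x) ` J"
  define Ys where "Ys = Xs - {K}"
  have KX: "K \<in> Xs" unfolding Xs_def
    using coset_mult_one[OF Kc] subgroup.one_closed[OF J] by (metis image_eqI)
  have finX: "finite Xs" unfolding Xs_def using finJ by simp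
  have cardY: "card Ys < p"
  proof -
    have "card Ys = card Xs - 1" unfolding Ys_def using KX finX by simp
    moreover have "card Xs > 0" using KX finX card_gt_0_iff by blast
    ultimately show ?thesis using cardX Xs_def by simp
  qed
  have finY: "finite Ys" using finX unfolding Ys_def by simp
  define f where "f = (\<lambda>S. \<sigma> ` S)"
  have fY: "\<And>S. S \<in> Ys \<Longrightarrow> f S \<in> Ys"
  proof -
    fix S assume S: "S \<in> Ys"
    then obtain y where y: "y \<in> J" "S = K #> y" "K #> y \<noteq> K" unfolding Ys_def Xs_def by auto
    have fS: "f S = K #> \<sigma> y" using img y f_def by simp
    have "K #> \<sigma> y \<noteq> K"
    proof
      assume "K #> \<sigma> y = K"
      then have "\<sigma> y \<in> K" using rcos_self[OF _ K] sJ y Jc by blast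
      then have "y \<in> K" using bK y by blast
      then have "K #> y = K" using subgroup.rcos_const[OF K is_group] by blast
      then show False using y by simp
    qed
    then show "f S \<in> Ys" using fS sJ y unfolding Ys_def Xs_def by auto
  qed
  have fpow: "\<And>n S. (f ^^ n) S = (\<sigma> ^^ n) ` S"
  proof -
    fix n S show "(f ^^ n) S = (\<sigma> ^^ n) ` S"
      by (induct n) (auto simp: f_def image_image)
  qed
  show ?thesis
  proof (cases "K #> x = K")
    case True
    then have "x \<in> K" using rcos_self[OF _ K] x Jc by blast
    then show ?thesis using True sK by simp
  next
    case False
    then have SY: "K #> x \<in> Ys" unfolding Ys_def Xs_def using x by auto
    have perS: "(f ^^ m) (K #> x) = K #> x"
    proof -
      have "(\<sigma> ^^ m) ` (K #> x) = (\<lambda>z. z) ` (K #> x)"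
        by (rule image_cong) (use per cosJ[OF x] in auto)
      then have "(\<sigma> ^^ m) ` (K #> x) = K #> x" by simp
      then show ?thesis using fpow by simp
    qed
    have "f (K #> x) = K #> x"
      by (rule orbit_fix[of Ys p f "K #> x" m]) (use finY cardY fY SY m pr perS in auto)
    then have "K #> \<sigma> x = K #> x" using img x f_def by simp
    then show ?thesis using rcos_self[OF _ K] sJ x Jc by (metis subsetD)
  qed
qed

lemma (in group) card_subgroup_dvd:
  assumes fin: "finite (carrier G)" and H: "subgroup H G" and K: "subgroup K G" and HK: "H \<subseteq> K"
  shows "card H dvd card K"
proof -
  interpret GK: group "G\<lparr>carrier := K\<rparr>" using subgroup_imp_group[OF K] .
  have "subgroup H (G\<lparr>carrier := K\<rparr>)" using subgroup_incl[OF H K HK] .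
  then have "card (rcosets\<^bsub>G\<lparr>carrier := K\<rparr>\<^esub> H) * card H = order (G\<lparr>carrier := K\<rparr>)"
    by (rule GK.lagrange)
  then have "card (rcosets\<^bsub>G\<lparr>carrier := K\<rparr>\<^esub> H) * card H = card K" by (simp add: order_def)
  then show ?thesis by (metis dvd_triv_right)
qed

lemma (in group) index_p_decomp:
  assumes fin: "finite (carrier G)" and p: "Factorial_Ring.prime p"
    and C: "subgroup C G" and cardC: "card (carrier G) = p * card C"
    and J: "J \<lhd> G" and nJC: "\<not> J \<subseteq> C"
  shows "J <#> C = carrier G"
proof -
  interpret second_isomorphism_grp J G C using J C
    by (simp add: second_isomorphism_grp_def second_isomorphism_grp_axioms_def)
  let ?H = "J <#> C"
  have H: "subgroup ?H G" by (rule normal_set_mult_subgroup)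
  have Jsub: "subgroup J G" using J normal_imp_subgroup by blast
  have CH: "C \<subseteq> ?H"
  proof
    fix c assume "c \<in> C"
    then have "\<one> \<otimes> c \<in> ?H" unfolding set_mult_def using subgroup.one_closed[OF Jsub] by blast
    then show "c \<in> ?H" using \<open>c \<in> C\<close> C subgroup.mem_carrier by fastforce
  qed
  have JH: "J \<subseteq> ?H"
  proof
    fix j assume "j \<in> J"
    then have "j \<otimes> \<one> \<in> ?H" unfolding set_mult_def using subgroup.one_closed[OF C] by blast
    then show "j \<in> ?H" using \<open>j \<in> J\<close> Jsub subgroup.mem_carrier by fastforce
  qed
  have Hc: "?H \<subseteq> carrier G" using H subgroup.subset by blast
  have finC: "finite C" using fin C subgroup.subset finite_subset by blast
  have finH: "finite ?H" using fin Hc finite_subset by blast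
  have C0: "card C > 0" using finC C subgroup.one_closed card_gt_0_iff by blast
  obtain t where t: "card ?H = card C * t" using card_subgroup_dvd[OF fin C H CH] by blast
  have "card ?H dvd card (carrier G)" using card_subgroup_dvd[OF fin H subgroup_self Hc] .
  then have "card C * t dvd card C * p" using t cardC by (simp only: mult.commute)
  then have "t dvd p" using C0 nat_mult_dvd_cancel_disj by auto
  then have "t = 1 \<or> t = p" using p prime_nat_iff by blast
  then show ?thesis
  proof
    assume "t = 1"
    then have "card C = card ?H" using t by simp
    then have "?H = C" using card_subset_eq[OF finH CH] by simp
    then show ?thesis using JH nJC by blast
  next
    assume "t = p"
    then have "card ?H = card (carrier G)" using t cardC by simp
    then show ?thesis using card_subset_eq[OF fin Hc] by simp
  qed
qed

lemma (in group) rcosets_restrict: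
  "rcosets\<^bsub>G\<lparr>carrier := J\<rparr>\<^esub> K = (\<lambda>x. K #> x) ` J"
  unfolding RCOSETS_def r_coset_def by auto

lemma (in group) inter_eq:
  assumes fin: "finite (carrier G)" and J: "subgroup J G" and K: "subgroup K G" and C: "subgroup C G"
    and KJ: "K \<subseteq> J" and KC: "K \<subseteq> C" and nJC: "\<not> J \<subseteq> C"
    and q: "Factorial_Ring.prime (card ((\<lambda>x. K #> x) ` J))"
  shows "J \<inter> C = K"
proof -
  let ?q = "card ((\<lambda>x. K #> x) ` J)"
  interpret GJ: group "G\<lparr>carrier := J\<rparr>" using subgroup_imp_group[OF J] .
  have "card (rcosets\<^bsub>G\<lparr>carrier := J\<rparr>\<^esub> K) * card K = order (G\<lparr>carrier := J\<rparr>)"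
    by (rule GJ.lagrange[OF subgroup_incl[OF K J KJ]])
  then have qK: "?q * card K = card J" by (simp add: rcosets_restrict order_def)
  have JC: "subgroup (J \<inter> C) G" using subgroups_Inter_pair[OF J C] .
  obtain s where s: "card (J \<inter> C) = card K * s" using card_subgroup_dvd[OF fin K JC] KJ KC by blast
  obtain r where r: "card J = card (J \<inter> C) * r" using card_subgroup_dvd[OF fin JC J] by blast
  have finJ: "finite J" using fin J subgroup.subset finite_subset by blast
  have K0: "card K > 0" using finJ KJ K subgroup.one_closed card_gt_0_iff finite_subset by blast
  have "card K * ?q = card K * (s * r)" using qK s r by (simp add: mult.commute mult.left_commute)
  then have "?q = s * r" using K0 by simp
  then have "s = 1 \<or> r = 1" using q prime_product by metis
  then show ?thesis
  proof
    assume "s = 1"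
    then show ?thesis using s KJ KC finJ
      by (metis Int_greatest card_subset_eq finite_Int mult_1_right)
  next
    assume "r = 1"
    then have "J \<inter> C = J" using r finJ by (metis Int_lower1 card_subset_eq mult_1_right)
    then show ?thesis using nJC by blast
  qed
qed

lemma (in group) factor_le:
  assumes fin: "finite (carrier G)" and J: "subgroup J G" and K: "subgroup K G" and C: "subgroup C G"
    and JCK: "J \<inter> C = K" and cardC: "card (carrier G) = p * card C"
  shows "card ((\<lambda>x. K #> x) ` J) \<le> p"
proof -
  have Cc: "C \<subseteq> carrier G" using C subgroup.subset by blast
  have Jc: "J \<subseteq> carrier G" using J subgroup.subset by blast
  have finC: "finite C" using fin Cc finite_subset by blast
  have C0: "card C > 0" using finC C subgroup.one_closed card_gt_0_iff by blast
  have "card (rcosets C) * card C = order G" by (rule lagrange[OF C])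
  then have rc: "card (rcosets C) = p" using cardC C0 by (simp add: order_def)
  have finR: "finite (rcosets C)" using fin by (simp add: RCOSETS_def)
  have eq: "\<And>j. j \<in> J \<Longrightarrow> C <#> (K #> j) = C #> j"
  proof -
    fix j assume j: "j \<in> J"
    have jc: "j \<in> carrier G" using j Jc by blast
    show "C <#> (K #> j) = C #> j"
    proof
      show "C <#> (K #> j) \<subseteq> C #> j"
      proof
        fix z assume "z \<in> C <#> (K #> j)"
        then obtain c k where ck: "c \<in> C" "k \<in> K" "z = c \<otimes> (k \<otimes> j)"
          unfolding set_mult_def r_coset_def by blast
        have kC: "k \<in> C" using ck JCK by blast
        have "z = (c \<otimes> k) \<otimes> j" using ck kC Cc jc by (simp add: m_assoc subsetD)
        moreover have "c \<otimes> k \<in> C" using subgroup.m_closed[OF C ck(1) kC] .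
        ultimately show "z \<in> C #> j" using rcosI[OF _ Cc jc] by simp
      qed
    next
      show "C #> j \<subseteq> C <#> (K #> j)"
      proof
        fix z assume "z \<in> C #> j"
        then obtain c where c: "c \<in> C" "z = c \<otimes> j" unfolding r_coset_def by blast
        have "\<one> \<otimes> j \<in> K #> j" unfolding r_coset_def using K subgroup.one_closed by blast
        moreover have "z = c \<otimes> (\<one> \<otimes> j)" using c jc by simp
        ultimately show "z \<in> C <#> (K #> j)" unfolding set_mult_def using c(1) by blast
      qed
    qed
  qed
  have inj: "inj_on (\<lambda>S. C <#> S) ((\<lambda>x. K #> x) ` J)"
  proof (rule inj_onI)
    fix S1 S2 assume S: "S1 \<in> (\<lambda>x. K #> x) ` J" "S2 \<in> (\<lambda>x. K #> x) ` J" "C <#> S1 = C <#> S2"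
    then obtain j1 j2 where j: "j1 \<in> J" "j2 \<in> J" "S1 = K #> j1" "S2 = K #> j2" by blast
    have j1c: "j1 \<in> carrier G" and j2c: "j2 \<in> carrier G" using j Jc by auto
    have "C #> j1 = C #> j2" using S j eq by simp
    then have "j1 \<in> C #> j2" using rcos_self[OF j1c C] by simp
    then obtain c where c: "c \<in> C" "j1 = c \<otimes> j2" unfolding r_coset_def by blast
    have cc: "c \<in> carrier G" using c Cc by blast
    have "c = j1 \<otimes> inv j2" using c cc j2c by (simp add: m_assoc)
    moreover have "j1 \<otimes> inv j2 \<in> J"
      using subgroup.m_closed[OF J j(1) subgroup.m_inv_closed[OF J j(2)]] .
    ultimately have "c \<in> J" by simp
    then have "c \<in> K" using JCK c by blast
    then have "j1 \<in> K #> j2" using c rcosI[OF _ subgroup.subset[OF K] j2c] by simp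
    then have "K #> j2 = K #> j1" using repr_independence[OF _ j2c K] by blast
    then show "S1 = S2" using j by simp
  qed
  have "card ((\<lambda>x. K #> x) ` J) \<le> card (rcosets C)"
  proof (rule card_inj_on_le[OF inj _ finR])
    show "(\<lambda>S. C <#> S) ` (\<lambda>x. K #> x) ` J \<subseteq> rcosets C"
    proof
      fix T assume "T \<in> (\<lambda>S. C <#> S) ` (\<lambda>x. K #> x) ` J"
      then obtain j where j: "j \<in> J" "T = C <#> (K #> j)" by blast
      then have "T = C #> j" using eq by simp
      then show "T \<in> rcosets C" using rcosetsI[OF Cc] j Jc by auto
    qed
  qed
  then show ?thesis using rc by simp
qed

lemma (in group) conj_pow:
  assumes b: "b \<in> carrier G" and x: "x \<in> carrier G"
  shows "((\<lambda>z. inv b \<otimes> z \<otimes> b) ^^ n) x = inv (b [^] n) \<otimes> x \<otimes> (b [^] n)"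
proof (induction n)
  case 0 then show ?case using x by simp
next
  case (Suc n)
  have bn: "b [^] n \<in> carrier G" using b by simp
  have "((\<lambda>z. inv b \<otimes> z \<otimes> b) ^^ Suc n) x = inv b \<otimes> (inv (b [^] n) \<otimes> x \<otimes> (b [^] n)) \<otimes> b"
    using Suc by simp
  also have "\<dots> = inv (b [^] n \<otimes> b) \<otimes> x \<otimes> (b [^] n \<otimes> b)"
    using b bn x by (simp add: inv_mult_group m_assoc)
  finally show ?case by simp
qed

lemma (in group) triv_mod_conj:
  fixes p :: nat
  assumes fin: "finite (carrier G)"
    and J: "J \<lhd> G" and K: "K \<lhd> G" and KJ: "K \<subseteq> J"
    and pr: "\<And>q. Factorial_Ring.prime q \<Longrightarrow> q dvd card (carrier G) \<Longrightarrow> p \<le> q"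
    and cardX: "card ((\<lambda>x. K #> x) ` J) \<le> p"
    and b: "b \<in> carrier G" and x: "x \<in> J"
  shows "inv b \<otimes> x \<otimes> b \<in> K #> x"
proof -
  have Js: "subgroup J G" and Ks: "subgroup K G" using J K normal_imp_subgroup by auto
  have Jc: "J \<subseteq> carrier G" using Js subgroup.subset by blast
  have m: "0 < card (carrier G)" using fin card_gt_0_iff by blast
  show ?thesis
  proof (rule triv_mod[OF fin Js Ks KJ _ _ _ _ m pr cardX x])
    fix y assume "y \<in> J" then show "inv b \<otimes> y \<otimes> b \<in> J"
      using normal.inv_op_closed1[OF J b] by blast
  next
    fix y assume "y \<in> K" then show "inv b \<otimes> y \<otimes> b \<in> K"
      using normal.inv_op_closed1[OF K b] by blast
  next
    fix y z assume yz: "y \<in> J" "z \<in> J"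
    then have yc: "y \<in> carrier G" and zc: "z \<in> carrier G" using Jc by auto
    show "inv b \<otimes> (y \<otimes> z) \<otimes> b = inv b \<otimes> y \<otimes> b \<otimes> (inv b \<otimes> z \<otimes> b)"
      using b yc zc by (simp add: m_assoc) (simp add: m_assoc[symmetric])
  next
    fix y assume "y \<in> J"
    then have yc: "y \<in> carrier G" using Jc by auto
    have "((\<lambda>z. inv b \<otimes> z \<otimes> b) ^^ card (carrier G)) y = inv (b [^] order G) \<otimes> y \<otimes> (b [^] order G)"
      using conj_pow[OF b yc] by (simp add: order_def)
    also have "\<dots> = y" using pow_order_eq_1[OF b] yc by simp
    finally show "((\<lambda>z. inv b \<otimes> z \<otimes> b) ^^ card (carrier G)) y = y" .
  qed
qed

lemma (in group) normal_from:
  assumes C: "subgroup C G" and J: "subgroup J G" and KC: "K \<subseteq> C"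
    and JC: "J <#> C = carrier G"
    and T: "\<And>y b. y \<in> J \<Longrightarrow> b \<in> carrier G \<Longrightarrow> inv b \<otimes> y \<otimes> b \<in> K #> y"
  shows "C \<lhd> G"
proof -
  have Cc: "C \<subseteq> carrier G" using C subgroup.subset by blast
  have Jc: "J \<subseteq> carrier G" using J subgroup.subset by blast
  have key: "\<And>j h. j \<in> J \<Longrightarrow> h \<in> C \<Longrightarrow> j \<otimes> h \<otimes> inv j \<in> C"
  proof -
    fix j h assume jh: "j \<in> J" "h \<in> C"
    have jc: "j \<in> carrier G" and hc: "h \<in> carrier G" using jh Jc Cc by auto
    have "inv h \<otimes> j \<otimes> h \<in> K #> j" using T[OF jh(1) hc] .
    then obtain k where k: "k \<in> K" "inv h \<otimes> j \<otimes> h = k \<otimes> j" unfolding r_coset_def by blast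
    have kC: "k \<in> C" using k KC by blast
    have kc: "k \<in> carrier G" using kC Cc by blast
    have "j \<otimes> h = h \<otimes> (k \<otimes> j)"
    proof -
      have "h \<otimes> (inv h \<otimes> j \<otimes> h) = j \<otimes> h" using hc jc by (simp add: m_assoc[symmetric])
      then show ?thesis using k by simp
    qed
    then have "j \<otimes> h \<otimes> inv j = h \<otimes> k" using hc jc kc by (simp add: m_assoc)
    moreover have "h \<otimes> k \<in> C" using subgroup.m_closed[OF C jh(2) kC] .
    ultimately show "j \<otimes> h \<otimes> inv j \<in> C" by simp
  qed
  show ?thesis
  proof (subst normal_inv_iff, intro conjI ballI)
    show "subgroup C G" by (rule C)
  next
    fix x h assume x: "x \<in> carrier G" and h: "h \<in> C"
    then obtain j c where jc: "j \<in> J" "c \<in> C" "x = j \<otimes> c"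
      using JC unfolding set_mult_def by blast
    have jcc: "j \<in> carrier G" "c \<in> carrier G" using jc Jc Cc by auto
    have hc: "h \<in> carrier G" using h Cc by blast
    have h': "c \<otimes> h \<otimes> inv c \<in> C"
      using subgroup.m_closed[OF C subgroup.m_closed[OF C jc(2) h] subgroup.m_inv_closed[OF C jc(2)]] .
    have "x \<otimes> h \<otimes> inv x = j \<otimes> (c \<otimes> h \<otimes> inv c) \<otimes> inv j"
      using jc jcc hc by (simp add: inv_mult_group m_assoc)
    then show "x \<otimes> h \<otimes> inv x \<in> C" using key[OF jc(1) h'] by simp
  qed
qed

locale brc =
  fixes A M :: "'a monoid"
  assumes br: "brace A M"
begin

lemma grpA: "group A" using br by (simp add: brace_def)
lemma grpM: "group M" using br by (simp add: brace_def)
lemma carr: "carrier M = carrier A" using br by (simp add: brace_def)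
lemma distr: "a \<in> carrier A \<Longrightarrow> b \<in> carrier A \<Longrightarrow> c \<in> carrier A \<Longrightarrow>
   a \<otimes>\<^bsub>M\<^esub> (b \<otimes>\<^bsub>A\<^esub> c) = ((a \<otimes>\<^bsub>M\<^esub> b) \<otimes>\<^bsub>A\<^esub> inv\<^bsub>A\<^esub> a) \<otimes>\<^bsub>A\<^esub> (a \<otimes>\<^bsub>M\<^esub> c)"
  using br by (simp add: brace_def)

sublocale A: group A by (rule grpA)
sublocale M: group M by (rule grpM)

abbreviation lam where "lam \<equiv> brace_lambda A M"

lemma Mc: "x \<in> carrier A \<Longrightarrow> x \<in> carrier M" using carr by simp

lemma M_closed: "a \<in> carrier A \<Longrightarrow> b \<in> carrier A \<Longrightarrow> a \<otimes>\<^bsub>M\<^esub> b \<in> carrier A"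
  using M.m_closed carr by simp

lemma one_eq: "\<one>\<^bsub>M\<^esub> = \<one>\<^bsub>A\<^esub>"
proof -
  have oM: "\<one>\<^bsub>M\<^esub> \<in> carrier A" using carr M.one_closed by simp
  have oA: "\<one>\<^bsub>A\<^esub> \<in> carrier M" using carr A.one_closed by simp
  have e: "\<one>\<^bsub>M\<^esub> \<otimes>\<^bsub>M\<^esub> \<one>\<^bsub>A\<^esub> = \<one>\<^bsub>A\<^esub>" using oA by simp
  have "\<one>\<^bsub>M\<^esub> \<otimes>\<^bsub>M\<^esub> (\<one>\<^bsub>A\<^esub> \<otimes>\<^bsub>A\<^esub> \<one>\<^bsub>A\<^esub>) =
     ((\<one>\<^bsub>M\<^esub> \<otimes>\<^bsub>M\<^esub> \<one>\<^bsub>A\<^esub>) \<otimes>\<^bsub>A\<^esub> inv\<^bsub>A\<^esub> \<one>\<^bsub>M\<^esub>) \<otimes>\<^bsub>A\<^esub> (\<one>\<^bsub>M\<^esub> \<otimes>\<^bsub>M\<^esub> \<one>\<^bsub>A\<^esub>)"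
    by (rule distr[OF oM A.one_closed A.one_closed])
  then have "\<one>\<^bsub>A\<^esub> = inv\<^bsub>A\<^esub> \<one>\<^bsub>M\<^esub>" using e oM by simp
  then have "inv\<^bsub>A\<^esub> \<one>\<^bsub>A\<^esub> = \<one>\<^bsub>M\<^esub>" using oM by simp
  then show ?thesis by simp
qed

lemma lam_closed: "a \<in> carrier A \<Longrightarrow> b \<in> carrier A \<Longrightarrow> lam a b \<in> carrier A"
  unfolding brace_lambda_def using M_closed by simp

lemma mult_lam: "a \<in> carrier A \<Longrightarrow> b \<in> carrier A \<Longrightarrow> a \<otimes>\<^bsub>M\<^esub> b = a \<otimes>\<^bsub>A\<^esub> lam a b"
  unfolding brace_lambda_def using M_closed by (simp add: A.m_assoc[symmetric])

lemma lam_hom: "a \<in> carrier A \<Longrightarrow> x \<in> carrier A \<Longrightarrow> y \<in> carrier A \<Longrightarrow>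
   lam a (x \<otimes>\<^bsub>A\<^esub> y) = lam a x \<otimes>\<^bsub>A\<^esub> lam a y"
  unfolding brace_lambda_def using distr M_closed by (simp add: A.m_assoc)

lemma lam_one_arg: "a \<in> carrier A \<Longrightarrow> lam a \<one>\<^bsub>A\<^esub> = \<one>\<^bsub>A\<^esub>"
proof -
  assume a: "a \<in> carrier A"
  have "a \<otimes>\<^bsub>M\<^esub> \<one>\<^bsub>A\<^esub> = a" using one_eq[symmetric] a Mc by simp
  then show ?thesis unfolding brace_lambda_def using a by simp
qed

lemma lam_inv_arg: "a \<in> carrier A \<Longrightarrow> b \<in> carrier A \<Longrightarrow> lam a (inv\<^bsub>A\<^esub> b) = inv\<^bsub>A\<^esub> (lam a b)"
proof -
  assume a: "a \<in> carrier A" and b: "b \<in> carrier A"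
  have "lam a (inv\<^bsub>A\<^esub> b) \<otimes>\<^bsub>A\<^esub> lam a b = lam a (inv\<^bsub>A\<^esub> b \<otimes>\<^bsub>A\<^esub> b)"
    using lam_hom[OF a A.inv_closed[OF b] b] by simp
  also have "\<dots> = \<one>\<^bsub>A\<^esub>" using lam_one_arg a b by simp
  finally show ?thesis using A.inv_equality lam_closed a b by simp
qed

lemma lam_comp: "a \<in> carrier A \<Longrightarrow> b \<in> carrier A \<Longrightarrow> c \<in> carrier A \<Longrightarrow>
   lam a (lam b c) = lam (a \<otimes>\<^bsub>M\<^esub> b) c"
proof -
  assume a: "a \<in> carrier A" and b: "b \<in> carrier A" and c: "c \<in> carrier A"
  have bc: "b \<otimes>\<^bsub>M\<^esub> c \<in> carrier A" and ab: "a \<otimes>\<^bsub>M\<^esub> b \<in> carrier A"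
    using M_closed a b c by auto
  have "lam a (lam b c) = lam a (inv\<^bsub>A\<^esub> b) \<otimes>\<^bsub>A\<^esub> lam a (b \<otimes>\<^bsub>M\<^esub> c)"
    unfolding brace_lambda_def[of A M b] using lam_hom a b bc by simp
  also have "\<dots> = inv\<^bsub>A\<^esub> (lam a b) \<otimes>\<^bsub>A\<^esub> lam a (b \<otimes>\<^bsub>M\<^esub> c)" using lam_inv_arg a b by simp
  also have "\<dots> = inv\<^bsub>A\<^esub> (a \<otimes>\<^bsub>M\<^esub> b) \<otimes>\<^bsub>A\<^esub> (a \<otimes>\<^bsub>M\<^esub> (b \<otimes>\<^bsub>M\<^esub> c))"
    unfolding brace_lambda_def using a ab bc M_closed
    by (simp add: A.inv_mult_group A.m_assoc) (simp add: A.m_assoc[symmetric])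
  also have "\<dots> = lam (a \<otimes>\<^bsub>M\<^esub> b) c"
    unfolding brace_lambda_def using a b c Mc by (simp add: M.m_assoc)
  finally show ?thesis .
qed

lemma lam_one: "x \<in> carrier A \<Longrightarrow> lam \<one>\<^bsub>M\<^esub> x = x"
  unfolding brace_lambda_def using one_eq Mc by (metis A.inv_one A.l_one M.l_one)

lemma lam_pow: "b \<in> carrier A \<Longrightarrow> x \<in> carrier A \<Longrightarrow> (lam b ^^ n) x = lam (b [^]\<^bsub>M\<^esub> n) x"
proof (induction n)
  case 0 then show ?case using lam_one by simp
next
  case (Suc n)
  have bn: "b [^]\<^bsub>M\<^esub> n \<in> carrier A" using Suc.prems carr M.nat_pow_closed by auto
  have "(lam b ^^ Suc n) x = lam b (lam (b [^]\<^bsub>M\<^esub> n) x)" using Suc by simp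
  also have "\<dots> = lam (b \<otimes>\<^bsub>M\<^esub> b [^]\<^bsub>M\<^esub> n) x" using lam_comp Suc.prems bn by simp
  also have "b \<otimes>\<^bsub>M\<^esub> b [^]\<^bsub>M\<^esub> n = b [^]\<^bsub>M\<^esub> Suc n"
    using M.nat_pow_Suc2[symmetric] Suc.prems Mc by blast
  finally show ?case .
qed

lemma lam_invM: "a \<in> carrier A \<Longrightarrow> x \<in> carrier A \<Longrightarrow> lam a (lam (inv\<^bsub>M\<^esub> a) x) = x"
proof -
  assume a: "a \<in> carrier A" and x: "x \<in> carrier A"
  have ia: "inv\<^bsub>M\<^esub> a \<in> carrier A" using a carr M.inv_closed by auto
  have "lam a (lam (inv\<^bsub>M\<^esub> a) x) = lam (a \<otimes>\<^bsub>M\<^esub> inv\<^bsub>M\<^esub> a) x" using lam_comp a ia x by simp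
  also have "\<dots> = x" using a Mc lam_one x by simp
  finally show ?thesis .
qed

lemma ideal_cosets:
  assumes I: "brace_ideal A M K" and x: "x \<in> carrier A"
  shows "K #>\<^bsub>M\<^esub> x = K #>\<^bsub>A\<^esub> x"
proof -
  have KA: "K \<lhd> A" and KM: "K \<lhd> M" and lK: "\<And>b y. b \<in> carrier M \<Longrightarrow> y \<in> K \<Longrightarrow> lam b y \<in> K"
    using I unfolding brace_ideal_def by auto
  have Kc: "K \<subseteq> carrier A" using KA normal_imp_subgroup subgroup.subset by blast
  have "K #>\<^bsub>M\<^esub> x = x <#\<^bsub>M\<^esub> K" using normal.coset_eq[OF KM] x carr by simp
  also have "\<dots> = x <#\<^bsub>A\<^esub> K"
  proof
    show "x <#\<^bsub>M\<^esub> K \<subseteq> x <#\<^bsub>A\<^esub> K"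
    proof
      fix z assume "z \<in> x <#\<^bsub>M\<^esub> K"
      then obtain k where k: "k \<in> K" "z = x \<otimes>\<^bsub>M\<^esub> k" unfolding l_coset_def by blast
      then have "z = x \<otimes>\<^bsub>A\<^esub> lam x k" using mult_lam x Kc by auto
      moreover have "lam x k \<in> K" using lK x k Mc by blast
      ultimately show "z \<in> x <#\<^bsub>A\<^esub> K" unfolding l_coset_def by blast
    qed
  next
    show "x <#\<^bsub>A\<^esub> K \<subseteq> x <#\<^bsub>M\<^esub> K"
    proof
      fix z assume "z \<in> x <#\<^bsub>A\<^esub> K"
      then obtain k where k: "k \<in> K" "z = x \<otimes>\<^bsub>A\<^esub> k" unfolding l_coset_def by blast
      have kc: "k \<in> carrier A" using k Kc by blast
      have ix: "inv\<^bsub>M\<^esub> x \<in> carrier M" using x Mc by simp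
      have k': "lam (inv\<^bsub>M\<^esub> x) k \<in> K" using lK[OF ix k(1)] .
      have k'c: "lam (inv\<^bsub>M\<^esub> x) k \<in> carrier A" using k' Kc by blast
      have "x \<otimes>\<^bsub>M\<^esub> lam (inv\<^bsub>M\<^esub> x) k = x \<otimes>\<^bsub>A\<^esub> lam x (lam (inv\<^bsub>M\<^esub> x) k)"
        using mult_lam x k'c by simp
      also have "\<dots> = z" using lam_invM x kc k by simp
      finally show "z \<in> x <#\<^bsub>M\<^esub> K" using k' unfolding l_coset_def by blast
    qed
  qed
  also have "\<dots> = K #>\<^bsub>A\<^esub> x" using normal.coset_eq[OF KA] x by simp
  finally show ?thesis .
qed

end

lemma step_exists: "P (0::nat) \<Longrightarrow> \<not> P n \<Longrightarrow> \<exists>i<n. P i \<and> \<not> P (Suc i)"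
proof (induct n)
  case 0 then show ?case by simp
next
  case (Suc n)
  show ?case
  proof (cases "P n")
    case True then show ?thesis using Suc by blast
  next
    case False
    then obtain i where "i < n" "P i" "\<not> P (Suc i)" using Suc by blast
    then show ?thesis by (intro exI[of _ i]) simp
  qed
qed

theorem theorem3p22:
  fixes A M :: "'a monoid" and C :: "'a set" and p :: nat
  assumes "supersoluble_brace A M"
    and "finite (carrier A)"
    and "Factorial_Ring.prime p" and "p dvd card (carrier A)"
    and "\<forall>q. Factorial_Ring.prime q \<and> q dvd card (carrier A) \<longrightarrow> p \<le> q"
    and "subbrace A M C"
    and "card (carrier A) = p * card C"
  shows "brace_ideal A M C"
proof -
  have br: "brace A M" using assms(1) unfolding supersoluble_brace_def by blast
  interpret brc A M by (rule brc.intro[OF br])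
  from assms(1) obtain I n where I0: "I 0 = {\<one>\<^bsub>A\<^esub>}" and In: "I n = carrier A"
    and Iid: "\<forall>i\<le>n. brace_ideal A M (I i)"
    and Ich: "\<forall>i<n. I i \<subseteq> I (Suc i) \<and>
           ((infinite_cyclic_in (A Mod (I i)) (brace_factor A (I (Suc i)) (I i)) \<and>
             brace_factor A (I (Suc i)) (I i) \<subseteq> brace_socle (A Mod (I i)) (M Mod (I i)))
            \<or> Factorial_Ring.prime (card (brace_factor A (I (Suc i)) (I i))))"
    unfolding supersoluble_brace_def by blast
  have fin: "finite (carrier A)" by (rule assms(2))
  have finM: "finite (carrier M)" using fin carr by simp
  have p: "Factorial_Ring.prime p" by (rule assms(3))
  have pr: "\<And>q. Factorial_Ring.prime q \<Longrightarrow> q dvd card (carrier A) \<Longrightarrow> p \<le> q"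
    using assms(5) by blast
  have prM: "\<And>q. Factorial_Ring.prime q \<Longrightarrow> q dvd card (carrier M) \<Longrightarrow> p \<le> q"
    using pr carr by simp
  have CsA: "subgroup C A" and CsM: "subgroup C M" using assms(6) unfolding subbrace_def by auto
  have Cc: "C \<subseteq> carrier A" using CsA subgroup.subset by blast
  have cardM: "card (carrier M) = p * card C" using assms(7) carr by simp
  have p1: "p > 1" using p prime_gt_1_nat by blast
  have nC: "\<not> I n \<subseteq> C"
  proof
    assume "I n \<subseteq> C"
    then have "C = carrier A" using In Cc by blast
    then have "card (carrier A) = p * card (carrier A)" using assms(7) by simp
    moreover have "card (carrier A) > 0" using fin A.one_closed card_gt_0_iff by blast
    ultimately show False using p1 by simp
  qed
  have I0C: "I 0 \<subseteq> C" using I0 subgroup.one_closed[OF CsA] by simp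
  obtain i where i: "i < n" "I i \<subseteq> C" "\<not> I (Suc i) \<subseteq> C"
    using step_exists[of "\<lambda>i. I i \<subseteq> C", OF I0C nC] by blast
  define K where "K = I i"
  define J where "J = I (Suc i)"
  have KI: "brace_ideal A M K" using Iid i(1) K_def by simp
  have JI: "brace_ideal A M J" using Iid i(1) J_def by simp
  have KA: "K \<lhd> A" and KM: "K \<lhd> M" and lK: "\<And>b y. b \<in> carrier M \<Longrightarrow> y \<in> K \<Longrightarrow> lam b y \<in> K"
    using KI unfolding brace_ideal_def by auto
  have JA: "J \<lhd> A" and JM: "J \<lhd> M" and lJ: "\<And>b y. b \<in> carrier M \<Longrightarrow> y \<in> J \<Longrightarrow> lam b y \<in> J"
    using JI unfolding brace_ideal_def by auto
  have Ks: "subgroup K A" and Js: "subgroup J A" and JsM: "subgroup J M"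
    using KA JA JM normal_imp_subgroup by auto
  have Jc: "J \<subseteq> carrier A" using Js subgroup.subset by blast
  have KJ: "K \<subseteq> J" using Ich i(1) K_def J_def by simp
  have KC: "K \<subseteq> C" using i K_def by simp
  have nJC: "\<not> J \<subseteq> C" using i J_def by simp
  have finJ: "finite J" using fin Jc finite_subset by blast
  have fac: "brace_factor A J K = (\<lambda>x. K #>\<^bsub>A\<^esub> x) ` J" unfolding brace_factor_def by simp
  have finfac: "finite (brace_factor A J K)" using fac finJ by simp
  have qprime: "Factorial_Ring.prime (card ((\<lambda>x. K #>\<^bsub>A\<^esub> x) ` J))"
  proof -
    have "(infinite_cyclic_in (A Mod K) (brace_factor A J K) \<and>
             brace_factor A J K \<subseteq> brace_socle (A Mod K) (M Mod K))
            \<or> Factorial_Ring.prime (card (brace_factor A J K))"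
      using Ich i(1) K_def J_def by simp
    then show ?thesis using finfac fac unfolding infinite_cyclic_in_def by auto
  qed
  have JCK: "J \<inter> C = K" by (rule A.inter_eq[OF fin Js Ks CsA KJ KC nJC qprime])
  have qle: "card ((\<lambda>x. K #>\<^bsub>A\<^esub> x) ` J) \<le> p" by (rule A.factor_le[OF fin Js Ks CsA JCK assms(7)])
  have facM: "(\<lambda>x. K #>\<^bsub>M\<^esub> x) ` J = (\<lambda>x. K #>\<^bsub>A\<^esub> x) ` J"
    by (rule image_cong) (use ideal_cosets[OF KI] Jc in auto)
  have qleM: "card ((\<lambda>x. K #>\<^bsub>M\<^esub> x) ` J) \<le> p" using qle facM by simp
  have T2: "\<And>y b. y \<in> J \<Longrightarrow> b \<in> carrier A \<Longrightarrow> inv\<^bsub>A\<^esub> b \<otimes>\<^bsub>A\<^esub> y \<otimes>\<^bsub>A\<^esub> b \<in> K #>\<^bsub>A\<^esub> y"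
    using A.triv_mod_conj[OF fin JA KA KJ pr qle] by blast
  have T3: "\<And>y b. y \<in> J \<Longrightarrow> b \<in> carrier M \<Longrightarrow> inv\<^bsub>M\<^esub> b \<otimes>\<^bsub>M\<^esub> y \<otimes>\<^bsub>M\<^esub> b \<in> K #>\<^bsub>M\<^esub> y"
    using M.triv_mod_conj[OF finM JM KM KJ prM qleM] by blast
  have m: "0 < card (carrier A)" using fin A.one_closed card_gt_0_iff by blast
  have T1: "\<And>b y. b \<in> carrier A \<Longrightarrow> y \<in> J \<Longrightarrow> lam b y \<in> K #>\<^bsub>A\<^esub> y"
  proof -
    fix b y assume b: "b \<in> carrier A" and y: "y \<in> J"
    have bM: "b \<in> carrier M" using b Mc by simp
    show "lam b y \<in> K #>\<^bsub>A\<^esub> y"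
    proof (rule A.triv_mod[OF fin Js Ks KJ _ _ _ _ m pr qle y])
      fix x assume "x \<in> J" then show "lam b x \<in> J" using lJ bM by blast
    next
      fix x assume "x \<in> K" then show "lam b x \<in> K" using lK bM by blast
    next
      fix x z assume "x \<in> J" "z \<in> J"
      then show "lam b (x \<otimes>\<^bsub>A\<^esub> z) = lam b x \<otimes>\<^bsub>A\<^esub> lam b z" using lam_hom b Jc by blast
    next
      fix x assume x: "x \<in> J"
      have xc: "x \<in> carrier A" using x Jc by blast
      have "(lam b ^^ card (carrier A)) x = lam (b [^]\<^bsub>M\<^esub> card (carrier A)) x" using lam_pow b xc by simp
      also have "b [^]\<^bsub>M\<^esub> card (carrier A) = \<one>\<^bsub>M\<^esub>"
        using M.pow_order_eq_1[OF bM] carr by (simp add: order_def)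
      finally show "(lam b ^^ card (carrier A)) x = x" using lam_one xc by simp
    qed
  qed
  have decA: "J <#>\<^bsub>A\<^esub> C = carrier A" by (rule A.index_p_decomp[OF fin p CsA assms(7) JA nJC])
  have decM: "J <#>\<^bsub>M\<^esub> C = carrier M" by (rule M.index_p_decomp[OF finM p CsM cardM JM nJC])
  have CA: "C \<lhd> A" by (rule A.normal_from[OF CsA Js KC decA T2])
  have CM: "C \<lhd> M" by (rule M.normal_from[OF CsM JsM KC decM T3])
  have lamC: "\<forall>b\<in>carrier M. \<forall>x\<in>C. lam b x \<in> C"
  proof (intro ballI)
    fix b x assume b: "b \<in> carrier M" and x: "x \<in> C"
    obtain j c where jc: "j \<in> J" "c \<in> C" "b = j \<otimes>\<^bsub>M\<^esub> c"
      using b decM unfolding set_mult_def by blast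
    have jA: "j \<in> carrier A" and cA: "c \<in> carrier A" and xA: "x \<in> carrier A"
      using jc x Jc Cc by auto
    have jM: "j \<in> carrier M" and cM: "c \<in> carrier M" and xM: "x \<in> carrier M"
      using jA cA xA Mc by auto
    have lb: "lam b x = lam j (lam c x)" using lam_comp[OF jA cA xA] jc by simp
    define y where "y = lam c x"
    have yC: "y \<in> C"
    proof -
      have "c \<otimes>\<^bsub>M\<^esub> x \<in> C" using subgroup.m_closed[OF CsM jc(2) x] .
      moreover have "inv\<^bsub>A\<^esub> c \<in> C" using subgroup.m_inv_closed[OF CsA jc(2)] .
      ultimately show ?thesis unfolding y_def brace_lambda_def using subgroup.m_closed[OF CsA] by blast
    qed
    have yA: "y \<in> carrier A" and yM: "y \<in> carrier M" using yC Cc Mc by auto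
    define y' where "y' = j \<otimes>\<^bsub>M\<^esub> y \<otimes>\<^bsub>M\<^esub> inv\<^bsub>M\<^esub> j"
    have y'C: "y' \<in> C" unfolding y'_def using normal.inv_op_closed2[OF CM jM yC] .
    have y'A: "y' \<in> carrier A" using y'C Cc by blast
    have "j \<otimes>\<^bsub>M\<^esub> y = y' \<otimes>\<^bsub>M\<^esub> j" unfolding y'_def using jM yM by (simp add: M.m_assoc)
    also have "\<dots> = y' \<otimes>\<^bsub>A\<^esub> lam y' j" using mult_lam y'A jA by simp
    finally have e1: "j \<otimes>\<^bsub>M\<^esub> y = y' \<otimes>\<^bsub>A\<^esub> lam y' j" .
    have "lam y' j \<in> K #>\<^bsub>A\<^esub> j" using T1[OF y'A jc(1)] .
    then obtain k where k: "k \<in> K" "lam y' j = k \<otimes>\<^bsub>A\<^esub> j" unfolding r_coset_def by blast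
    have kC: "k \<in> C" using k KC by blast
    have kA: "k \<in> carrier A" using kC Cc by blast
    have "lam j y = inv\<^bsub>A\<^esub> j \<otimes>\<^bsub>A\<^esub> (y' \<otimes>\<^bsub>A\<^esub> (k \<otimes>\<^bsub>A\<^esub> j))"
      unfolding brace_lambda_def using e1 k by simp
    also have "\<dots> = inv\<^bsub>A\<^esub> j \<otimes>\<^bsub>A\<^esub> (y' \<otimes>\<^bsub>A\<^esub> k) \<otimes>\<^bsub>A\<^esub> j"
      using jA y'A kA by (simp add: A.m_assoc)
    finally have e2: "lam j y = inv\<^bsub>A\<^esub> j \<otimes>\<^bsub>A\<^esub> (y' \<otimes>\<^bsub>A\<^esub> k) \<otimes>\<^bsub>A\<^esub> j" .
    have "y' \<otimes>\<^bsub>A\<^esub> k \<in> C" using subgroup.m_closed[OF CsA y'C kC] .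
    then have "inv\<^bsub>A\<^esub> j \<otimes>\<^bsub>A\<^esub> (y' \<otimes>\<^bsub>A\<^esub> k) \<otimes>\<^bsub>A\<^esub> j \<in> C"
      using normal.inv_op_closed1[OF CA jA] by blast
    then show "lam b x \<in> C" using lb e2 y_def by simp
  qed
  show ?thesis unfolding brace_ideal_def using assms(6) CA CM lamC by blast
qed

end
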